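(* Let $G$ be a finite group acting transitively on a finite set $X$, fix $x_0\in X$, let $H=G_{x_0}$, and let $K\subset G$ be a regular subgroup. Let $H$ act on $K$ by $h\cdot k=k'$ iff $hk\cdot x_0=k'\cdot x_0$, and let $L^2(K)^H=\{\varphi\colon K\to\mathbb{C}:\varphi(h\cdot k)=\varphi(k)\ \forall h\in H,k\in K\}$. Then $L^2(K)^H$ is a $*$-subalgebra of $L^2(K)$ (with convolution $(\varphi_1*\varphi_2)(k)=\sum_{k'\in K}\varphi_1(k')\varphi_2(k'^{-1}k)$ and involution $\varphi^*(k)=\overline{\varphi(k^{-1})}$), and the map $A\mapsto \tilde\varphi_A$, $\tilde\varphi_A(k)=A_{x_0,k\cdot x_0}$ ($k\in K$), is a $*$-algebra isomorphism from $\mathscr{A}$ onto $L^2(K)^H$.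
   Context: $\mathscr{A}$ denotes the $*$-algebra (under matrix multiplication and conjugate transpose) of complex $X\times X$ matrices $M$ with $M_{g\cdot x,g\cdot y}=M_{x,y}$ for all $g\in G$, $x,y\in X$. A subgroup $K\subset G$ is regular if it acts transitively on $X$ with trivial point stabilizers. *)

theory Defs
  imports "HOL-Algebra.Group_Action" "HOL-Analysis.Analysis"
begin

text \<open>Matrices indexed by the finite set X are functions X \<Rightarrow> X \<Rightarrow> complex,
  normalised to be 0 outside X \<times> X.\<close>

definition mat_on :: "'x set \<Rightarrow> ('x \<Rightarrow> 'x \<Rightarrow> complex) set" where
  "mat_on X = {M. \<forall>x y. (x \<notin> X \<or> y \<notin> X) \<longrightarrow> M x y = 0}"

definition mat_mult :: "'x set \<Rightarrow> ('x \<Rightarrow> 'x \<Rightarrow> complex) \<Rightarrow> ('x \<Rightarrow> 'x \<Rightarrow> complex) \<Rightarrow> ('x \<Rightarrow> 'x \<Rightarrow> complex)" where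
  "mat_mult X A B = (\<lambda>x y. if x \<in> X \<and> y \<in> X then (\<Sum>z\<in>X. A x z * B z y) else 0)"

definition mat_star :: "'x set \<Rightarrow> ('x \<Rightarrow> 'x \<Rightarrow> complex) \<Rightarrow> ('x \<Rightarrow> 'x \<Rightarrow> complex)" where
  "mat_star X A = (\<lambda>x y. if x \<in> X \<and> y \<in> X then cnj (A y x) else 0)"

definition inv_matrices :: "('g, 'm) monoid_scheme \<Rightarrow> 'x set \<Rightarrow> ('g \<Rightarrow> 'x \<Rightarrow> 'x) \<Rightarrow> ('x \<Rightarrow> 'x \<Rightarrow> complex) set" where
  "inv_matrices G X \<phi> = {M \<in> mat_on X. \<forall>g\<in>carrier G. \<forall>x\<in>X. \<forall>y\<in>X. M (\<phi> g x) (\<phi> g y) = M x y}"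

definition regular_subgroup :: "('g, 'm) monoid_scheme \<Rightarrow> 'x set \<Rightarrow> ('g \<Rightarrow> 'x \<Rightarrow> 'x) \<Rightarrow> 'g set \<Rightarrow> bool" where
  "regular_subgroup G X \<phi> K \<longleftrightarrow> subgroup K G
     \<and> (\<forall>x\<in>X. \<forall>y\<in>X. \<exists>k\<in>K. \<phi> k x = y)
     \<and> (\<forall>x\<in>X. \<forall>k\<in>K. \<phi> k x = x \<longrightarrow> k = \<one>\<^bsub>G\<^esub>)"

definition fun_on :: "'g set \<Rightarrow> ('g \<Rightarrow> complex) set" where
  "fun_on K = {f. \<forall>k. k \<notin> K \<longrightarrow> f k = 0}"

definition conv :: "('g, 'm) monoid_scheme \<Rightarrow> 'g set \<Rightarrow> ('g \<Rightarrow> complex) \<Rightarrow> ('g \<Rightarrow> complex) \<Rightarrow> ('g \<Rightarrow> complex)" where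
  "conv G K f1 f2 = (\<lambda>k. if k \<in> K then (\<Sum>k'\<in>K. f1 k' * f2 (inv\<^bsub>G\<^esub> k' \<otimes>\<^bsub>G\<^esub> k)) else 0)"

definition fstar :: "('g, 'm) monoid_scheme \<Rightarrow> 'g set \<Rightarrow> ('g \<Rightarrow> complex) \<Rightarrow> ('g \<Rightarrow> complex)" where
  "fstar G K f = (\<lambda>k. if k \<in> K then cnj (f (inv\<^bsub>G\<^esub> k)) else 0)"

definition hact :: "('g, 'm) monoid_scheme \<Rightarrow> ('g \<Rightarrow> 'x \<Rightarrow> 'x) \<Rightarrow> 'g set \<Rightarrow> 'x \<Rightarrow> 'g \<Rightarrow> 'g \<Rightarrow> 'g" where
  "hact G \<phi> K x0 h k = (THE k'. k' \<in> K \<and> \<phi> (h \<otimes>\<^bsub>G\<^esub> k) x0 = \<phi> k' x0)"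

definition L2_inv :: "('g, 'm) monoid_scheme \<Rightarrow> ('g \<Rightarrow> 'x \<Rightarrow> 'x) \<Rightarrow> 'g set \<Rightarrow> 'x \<Rightarrow> 'g set \<Rightarrow> ('g \<Rightarrow> complex) set" where
  "L2_inv G \<phi> K x0 H = {f \<in> fun_on K. \<forall>h\<in>H. \<forall>k\<in>K. f (hact G \<phi> K x0 h k) = f k}"

definition phi_tilde :: "('g \<Rightarrow> 'x \<Rightarrow> 'x) \<Rightarrow> 'g set \<Rightarrow> 'x \<Rightarrow> ('x \<Rightarrow> 'x \<Rightarrow> complex) \<Rightarrow> ('g \<Rightarrow> complex)" where
  "phi_tilde \<phi> K x0 A = (\<lambda>k. if k \<in> K then A x0 (\<phi> k x0) else 0)"

end

theory Submission
  imports Defs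
begin

locale thm_setup = transitive_action G X \<phi>
  for G (structure) and X :: "'x set" and \<phi> :: "'g \<Rightarrow> 'x \<Rightarrow> 'x" +
  fixes x0 :: 'x and K :: "'g set"
  assumes finX: "finite X" and x0: "x0 \<in> X" and reg: "regular_subgroup G X \<phi> K"
begin

lemma grp: "group G"
  using group_hom group_hom.axioms(1) by blast

end

sublocale thm_setup \<subseteq> group G by (rule grp)

context thm_setup begin

lemma sub: "subgroup K G" using reg by (simp add: regular_subgroup_def)

lemma Kc: "k \<in> K \<Longrightarrow> k \<in> carrier G" using subgroup.mem_carrier[OF sub] by simp

lemma img: "g \<in> carrier G \<Longrightarrow> x \<in> X \<Longrightarrow> \<phi> g x \<in> X"
  by (rule element_image) auto

lemma comp: "g1 \<in> carrier G \<Longrightarrow> g2 \<in> carrier G \<Longrightarrow> x \<in> X \<Longrightarrow> \<phi> (g1 \<otimes> g2) x = \<phi> g1 (\<phi> g2 x)"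
  by (rule composition_rule)

lemma one: "x \<in> X \<Longrightarrow> \<phi> \<one> x = x"
  by (simp add: id_eq_one[symmetric])

lemma inv1: "g \<in> carrier G \<Longrightarrow> x \<in> X \<Longrightarrow> \<phi> (inv g) (\<phi> g x) = x"
proof -
  assume a: "g \<in> carrier G" "x \<in> X"
  have "\<phi> (inv g \<otimes> g) x = \<phi> (inv g) (\<phi> g x)" using a by (intro comp) simp_all
  then show ?thesis using a by (simp add: one)
qed

lemma inv2: "g \<in> carrier G \<Longrightarrow> x \<in> X \<Longrightarrow> \<phi> g (\<phi> (inv g) x) = x"
proof -
  assume a: "g \<in> carrier G" "x \<in> X"
  have "\<phi> (g \<otimes> inv g) x = \<phi> g (\<phi> (inv g) x)" using a by (intro comp) simp_all
  then show ?thesis using a by (simp add: one)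
qed

lemma uniqK: assumes "k \<in> K" "k' \<in> K" "\<phi> k x0 = \<phi> k' x0" shows "k = k'"
proof -
  have "inv k' \<otimes> k \<in> K" using assms sub by (simp add: subgroup.m_closed subgroup.m_inv_closed)
  moreover have "\<phi> (inv k' \<otimes> k) x0 = x0"
    using assms by (simp add: comp Kc x0 inv1 group.inv_closed[OF grp])
  moreover have "\<forall>x\<in>X. \<forall>k\<in>K. \<phi> k x = x \<longrightarrow> k = \<one>" using reg by (simp add: regular_subgroup_def)
  ultimately have "inv k' \<otimes> k = \<one>" using x0 by simp
  then have "k' \<otimes> (inv k' \<otimes> k) = k' \<otimes> \<one>" by simp
  then show ?thesis using assms Kc by (simp add: m_assoc[symmetric])
qed

lemma exK: "z \<in> X \<Longrightarrow> \<exists>k\<in>K. z = \<phi> k x0"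
proof -
  assume "z \<in> X"
  moreover have "\<forall>x\<in>X. \<forall>y\<in>X. \<exists>k\<in>K. \<phi> k x = y" using reg by (simp add: regular_subgroup_def)
  ultimately have "\<exists>k\<in>K. \<phi> k x0 = z" using x0 by simp
  then show ?thesis by auto
qed

definition kap :: "'x \<Rightarrow> 'g" where "kap z = (THE k. k \<in> K \<and> z = \<phi> k x0)"

lemma kap: assumes "z \<in> X" shows "kap z \<in> K" "\<phi> (kap z) x0 = z"
proof -
  obtain k where k: "k \<in> K" "z = \<phi> k x0" using exK[OF assms] by blast
  have "\<exists>!k. k \<in> K \<and> z = \<phi> k x0"
  proof (rule ex1I[of _ k])
    show "k \<in> K \<and> z = \<phi> k x0" using k by simp
    show "\<And>y. y \<in> K \<and> z = \<phi> y x0 \<Longrightarrow> y = k" using uniqK k by simp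
  qed
  then have "kap z \<in> K \<and> z = \<phi> (kap z) x0" unfolding kap_def by (rule theI')
  then show "kap z \<in> K" "\<phi> (kap z) x0 = z" by auto
qed

lemma kap_eq: "k \<in> K \<Longrightarrow> kap (\<phi> k x0) = k"
proof -
  assume k: "k \<in> K"
  have z: "\<phi> k x0 \<in> X" using img Kc k x0 by blast
  show ?thesis using uniqK[OF kap(1)[OF z] k] kap(2)[OF z] by simp
qed

lemma hact_eq: "hact G \<phi> K x0 h k = kap (\<phi> (h \<otimes> k) x0)"
  unfolding hact_def kap_def by simp

lemma kap_x0: "kap x0 = \<one>"
proof -
  have "\<one> \<in> K" using sub subgroup.one_closed by blast
  then have "kap (\<phi> \<one> x0) = \<one>" by (rule kap_eq)
  then show ?thesis using one x0 by simp
qed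

lemma bijK: "bij_betw (\<lambda>k. \<phi> k x0) K X"
proof -
  have "inj_on (\<lambda>k. \<phi> k x0) K" unfolding inj_on_def using uniqK by blast
  moreover have "(\<lambda>k. \<phi> k x0) ` K = X"
  proof
    show "(\<lambda>k. \<phi> k x0) ` K \<subseteq> X" using img Kc x0 by blast
    show "X \<subseteq> (\<lambda>k. \<phi> k x0) ` K" using exK by blast
  qed
  ultimately show ?thesis unfolding bij_betw_def by blast
qed

lemma bijg: "g \<in> carrier G \<Longrightarrow> bij_betw (\<phi> g) X X"
  using bij_prop0 by (simp add: Bij_def)


abbreviation "Hs \<equiv> stabilizer G \<phi> x0"
abbreviation "pt \<equiv> phi_tilde \<phi> K x0"
abbreviation "L2 \<equiv> L2_inv G \<phi> K x0 Hs"
abbreviation "IM \<equiv> inv_matrices G X \<phi>"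

lemma hact_in: assumes h: "h \<in> carrier G" and k: "k \<in> K"
  shows "hact G \<phi> K x0 h k \<in> K" "\<phi> (hact G \<phi> K x0 h k) x0 = \<phi> h (\<phi> k x0)"
proof -
  have kc: "k \<in> carrier G" using Kc k .
  have z: "\<phi> (h \<otimes> k) x0 \<in> X" using h kc x0 by (intro img) simp_all
  show "hact G \<phi> K x0 h k \<in> K" unfolding hact_eq using kap(1)[OF z] .
  have "\<phi> (hact G \<phi> K x0 h k) x0 = \<phi> (h \<otimes> k) x0" unfolding hact_eq using kap(2)[OF z] .
  also have "\<dots> = \<phi> h (\<phi> k x0)" using h kc x0 by (rule comp)
  finally show "\<phi> (hact G \<phi> K x0 h k) x0 = \<phi> h (\<phi> k x0)" .
qed

lemma invmD: "A \<in> IM \<Longrightarrow> g \<in> carrier G \<Longrightarrow> x \<in> X \<Longrightarrow> y \<in> X \<Longrightarrow> A (\<phi> g x) (\<phi> g y) = A x y"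
  by (simp add: inv_matrices_def)

lemma invm_out: "A \<in> IM \<Longrightarrow> \<not> (x \<in> X \<and> y \<in> X) \<Longrightarrow> A x y = 0"
  by (auto simp add: inv_matrices_def mat_on_def)

lemma stabI: "h \<in> Hs \<Longrightarrow> h \<in> carrier G \<and> \<phi> h x0 = x0"
  by (simp add: stabilizer_def)

lemma phx: "k \<in> K \<Longrightarrow> \<phi> k x0 \<in> X"
  using img Kc x0 by simp

lemma L1: assumes A: "A \<in> IM" shows "pt A \<in> L2"
  unfolding L2_inv_def fun_on_def
proof (intro CollectI conjI allI impI ballI)
  fix k :: 'g assume "k \<notin> K" then show "pt A k = 0" by (simp add: phi_tilde_def)
next
  fix h k assume h: "h \<in> Hs" and k: "k \<in> K"
  have hc: "h \<in> carrier G" and hx: "\<phi> h x0 = x0" using stabI[OF h] by auto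
  have "pt A (hact G \<phi> K x0 h k) = A x0 (\<phi> h (\<phi> k x0))"
    using hact_in[OF hc k] by (simp add: phi_tilde_def)
  also have "\<dots> = A (\<phi> h x0) (\<phi> h (\<phi> k x0))" using hx by simp
  also have "\<dots> = A x0 (\<phi> k x0)" using invmD[OF A hc x0 phx[OF k]] .
  also have "\<dots> = pt A k" using k by (simp add: phi_tilde_def)
  finally show "pt A (hact G \<phi> K x0 h k) = pt A k" .
qed

lemma rep: assumes A: "A \<in> IM" and x: "x \<in> X" and y: "y \<in> X"
  shows "A x y = pt A (kap (\<phi> (inv (kap x)) y))"
proof -
  have aK: "kap x \<in> K" and ax: "\<phi> (kap x) x0 = x" using kap[OF x] by auto
  have ac: "kap x \<in> carrier G" using Kc aK .
  have z: "\<phi> (inv (kap x)) y \<in> X" using ac y by (intro img) simp_all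
  have cK: "kap (\<phi> (inv (kap x)) y) \<in> K" using kap(1)[OF z] .
  have "pt A (kap (\<phi> (inv (kap x)) y)) = A x0 (\<phi> (inv (kap x)) y)"
    using cK kap(2)[OF z] by (simp add: phi_tilde_def)
  also have "\<dots> = A (\<phi> (kap x) x0) (\<phi> (kap x) (\<phi> (inv (kap x)) y))"
    using invmD[OF A ac x0 z] by simp
  also have "\<dots> = A x y" using ax inv2[OF ac y] by simp
  finally show ?thesis by simp
qed

lemma inj: "inj_on pt IM"
proof (rule inj_onI)
  fix A B assume A: "A \<in> IM" and B: "B \<in> IM" and e: "pt A = pt B"
  show "A = B"
  proof (intro ext)
    fix x y
    show "A x y = B x y"
    proof (cases "x \<in> X \<and> y \<in> X")
      case True
      then show ?thesis using rep[OF A] rep[OF B] e by simp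
    next
      case False
      then show ?thesis using invm_out[OF A] invm_out[OF B] by simp
    qed
  qed
qed

definition Mf :: "('g \<Rightarrow> complex) \<Rightarrow> 'x \<Rightarrow> 'x \<Rightarrow> complex" where
  "Mf f = (\<lambda>x y. if x \<in> X \<and> y \<in> X then f (kap (\<phi> (inv (kap x)) y)) else 0)"

lemma L2D: "f \<in> L2 \<Longrightarrow> h \<in> Hs \<Longrightarrow> k \<in> K \<Longrightarrow> f (hact G \<phi> K x0 h k) = f k"
  by (simp add: L2_inv_def)

lemma L2out: "f \<in> L2 \<Longrightarrow> k \<notin> K \<Longrightarrow> f k = 0"
  by (simp add: L2_inv_def fun_on_def)

lemma Mf_inv: assumes f: "f \<in> L2" shows "Mf f \<in> IM"
  unfolding inv_matrices_def
proof (intro CollectI conjI ballI)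
  show "Mf f \<in> mat_on X" by (simp add: mat_on_def Mf_def)
next
  fix g x y assume g: "g \<in> carrier G" and x: "x \<in> X" and y: "y \<in> X"
  have gx: "\<phi> g x \<in> X" and gy: "\<phi> g y \<in> X" using g x y img by auto
  define a where "a = kap x"
  define b where "b = kap (\<phi> g x)"
  have aK: "a \<in> K" and ax: "\<phi> a x0 = x" using kap[OF x] a_def by auto
  have bK: "b \<in> K" and bx: "\<phi> b x0 = \<phi> g x" using kap[OF gx] b_def by auto
  have ac: "a \<in> carrier G" and bc: "b \<in> carrier G" using Kc aK bK by auto
  define h where "h = inv b \<otimes> g \<otimes> a"
  have hc: "h \<in> carrier G" using ac bc g h_def by simp
  have hphi: "\<phi> h w = \<phi> (inv b) (\<phi> g (\<phi> a w))" if w: "w \<in> X" for w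
  proof -
    have "\<phi> h w = \<phi> (inv b \<otimes> g) (\<phi> a w)" unfolding h_def using bc g ac w by (intro comp) simp_all
    also have "\<dots> = \<phi> (inv b) (\<phi> g (\<phi> a w))" using bc g ac w img by (intro comp) simp_all
    finally show ?thesis .
  qed
  have "\<phi> h x0 = x0" using hphi[OF x0] ax bx inv1[OF bc x0] by simp
  then have hH: "h \<in> Hs" using hc by (simp add: stabilizer_def)
  define z where "z = \<phi> (inv a) y"
  have z: "z \<in> X" using ac y z_def by (simp add: img)
  define c where "c = kap z"
  have cK: "c \<in> K" and cz: "\<phi> c x0 = z" using kap[OF z] c_def by auto
  have "\<phi> (inv b) (\<phi> g y) = \<phi> h z" using hphi[OF z] inv2[OF ac y] z_def by simp
  also have "\<dots> = \<phi> (hact G \<phi> K x0 h c) x0" using hact_in(2)[OF hc cK] cz by simp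
  finally have e: "kap (\<phi> (inv b) (\<phi> g y)) = hact G \<phi> K x0 h c"
    using kap_eq[OF hact_in(1)[OF hc cK]] by simp
  have "Mf f (\<phi> g x) (\<phi> g y) = f (kap (\<phi> (inv b) (\<phi> g y)))" using gx gy b_def by (simp add: Mf_def)
  also have "\<dots> = f c" using e L2D[OF f hH cK] by simp
  also have "\<dots> = Mf f x y" using x y a_def z_def c_def by (simp add: Mf_def)
  finally show "Mf f (\<phi> g x) (\<phi> g y) = Mf f x y" .
qed

lemma Mf_pt: assumes f: "f \<in> L2" shows "pt (Mf f) = f"
proof (intro ext)
  fix k show "pt (Mf f) k = f k"
  proof (cases "k \<in> K")
    case True
    have "pt (Mf f) k = f (kap (\<phi> (inv \<one>) (\<phi> k x0)))"
      using True phx[OF True] x0 by (simp add: phi_tilde_def Mf_def kap_x0)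
    also have "\<dots> = f k" using one[OF phx[OF True]] kap_eq[OF True] by simp
    finally show ?thesis .
  next
    case False then show ?thesis using L2out[OF f] by (simp add: phi_tilde_def)
  qed
qed

lemma bij: "bij_betw pt IM L2"
  unfolding bij_betw_def
proof (intro conjI inj)
  show "pt ` IM = L2"
  proof
    show "pt ` IM \<subseteq> L2" using L1 by blast
    show "L2 \<subseteq> pt ` IM"
    proof
      fix f assume f: "f \<in> L2"
      then have "f = pt (Mf f)" using Mf_pt by simp
      then show "f \<in> pt ` IM" using Mf_inv[OF f] by blast
    qed
  qed
qed

lemma mult_hom: assumes A: "A \<in> IM" and B: "B \<in> IM"
  shows "pt (mat_mult X A B) = conv G K (pt A) (pt B)"
proof (intro ext)
  fix k show "pt (mat_mult X A B) k = conv G K (pt A) (pt B) k"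
  proof (cases "k \<in> K")
    case True
    have kc: "k \<in> carrier G" using Kc True .
    have "pt (mat_mult X A B) k = (\<Sum>z\<in>X. A x0 z * B z (\<phi> k x0))"
      using True phx[OF True] x0 by (simp add: phi_tilde_def mat_mult_def)
    also have "\<dots> = (\<Sum>k'\<in>K. A x0 (\<phi> k' x0) * B (\<phi> k' x0) (\<phi> k x0))"
      by (rule sum.reindex_bij_betw[OF bijK, symmetric])
    also have "\<dots> = (\<Sum>k'\<in>K. pt A k' * pt B (inv k' \<otimes> k))"
    proof (rule sum.cong[OF refl])
      fix k' assume k': "k' \<in> K"
      have k'c: "k' \<in> carrier G" using Kc k' .
      have iK: "inv k' \<otimes> k \<in> K" using k' True sub
        by (simp add: subgroup.m_closed subgroup.m_inv_closed)
      have "\<phi> k' (\<phi> (inv k' \<otimes> k) x0) = \<phi> (k' \<otimes> (inv k' \<otimes> k)) x0"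
        using k'c kc x0 by (intro comp[symmetric]) simp_all
      also have "\<dots> = \<phi> k x0" using k'c kc by (simp add: m_assoc[symmetric])
      finally have e: "\<phi> k' (\<phi> (inv k' \<otimes> k) x0) = \<phi> k x0" .
      have "B x0 (\<phi> (inv k' \<otimes> k) x0) = B (\<phi> k' x0) (\<phi> k x0)"
        using invmD[OF B k'c x0 phx[OF iK]] e by simp
      then show "A x0 (\<phi> k' x0) * B (\<phi> k' x0) (\<phi> k x0) = pt A k' * pt B (inv k' \<otimes> k)"
        using k' iK by (simp add: phi_tilde_def)
    qed
    also have "\<dots> = conv G K (pt A) (pt B) k" using True by (simp add: conv_def)
    finally show ?thesis .
  next
    case False then show ?thesis by (simp add: phi_tilde_def conv_def)
  qed
qed

lemma star_hom: assumes A: "A \<in> IM"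
  shows "pt (mat_star X A) = fstar G K (pt A)"
proof (intro ext)
  fix k show "pt (mat_star X A) k = fstar G K (pt A) k"
  proof (cases "k \<in> K")
    case True
    have kc: "k \<in> carrier G" using Kc True .
    have iK: "inv k \<in> K" using True sub by (simp add: subgroup.m_inv_closed)
    have "A x0 (\<phi> (inv k) x0) = A (\<phi> k x0) (\<phi> k (\<phi> (inv k) x0))"
      using invmD[OF A kc x0 phx[OF iK]] by simp
    also have "\<dots> = A (\<phi> k x0) x0" using inv2[OF kc x0] by simp
    finally have e: "A x0 (\<phi> (inv k) x0) = A (\<phi> k x0) x0" .
    show ?thesis using True iK phx[OF True] x0 e by (simp add: phi_tilde_def mat_star_def fstar_def)
  next
    case False then show ?thesis by (simp add: phi_tilde_def fstar_def)
  qed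
qed

lemma mult_inv: assumes A: "A \<in> IM" and B: "B \<in> IM" shows "mat_mult X A B \<in> IM"
  unfolding inv_matrices_def
proof (intro CollectI conjI ballI)
  show "mat_mult X A B \<in> mat_on X" by (simp add: mat_on_def mat_mult_def)
next
  fix g x y assume g: "g \<in> carrier G" and x: "x \<in> X" and y: "y \<in> X"
  have gx: "\<phi> g x \<in> X" and gy: "\<phi> g y \<in> X" using g x y img by auto
  have "mat_mult X A B (\<phi> g x) (\<phi> g y) = (\<Sum>z\<in>X. A (\<phi> g x) z * B z (\<phi> g y))"
    using gx gy by (simp add: mat_mult_def)
  also have "\<dots> = (\<Sum>z\<in>X. A (\<phi> g x) (\<phi> g z) * B (\<phi> g z) (\<phi> g y))"
    by (rule sum.reindex_bij_betw[OF bijg[OF g], symmetric])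
  also have "\<dots> = (\<Sum>z\<in>X. A x z * B z y)"
    using invmD[OF A g x] invmD[OF B g _ y] by (intro sum.cong) simp_all
  also have "\<dots> = mat_mult X A B x y" using x y by (simp add: mat_mult_def)
  finally show "mat_mult X A B (\<phi> g x) (\<phi> g y) = mat_mult X A B x y" .
qed

lemma star_inv: assumes A: "A \<in> IM" shows "mat_star X A \<in> IM"
  unfolding inv_matrices_def
proof (intro CollectI conjI ballI)
  show "mat_star X A \<in> mat_on X" by (simp add: mat_on_def mat_star_def)
next
  fix g x y assume g: "g \<in> carrier G" and x: "x \<in> X" and y: "y \<in> X"
  have gx: "\<phi> g x \<in> X" and gy: "\<phi> g y \<in> X" using g x y img by auto
  show "mat_star X A (\<phi> g x) (\<phi> g y) = mat_star X A x y"
    using gx gy x y invmD[OF A g y x] by (simp add: mat_star_def)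
qed

end

theorem theorem3p11:
  fixes G (structure) and X :: "'x set" and \<phi> :: "'g \<Rightarrow> 'x \<Rightarrow> 'x"
    and x0 :: 'x and H K :: "'g set"
  assumes "transitive_action G X \<phi>"
    and "finite (carrier G)" and "finite X"
    and "x0 \<in> X"
    and "H = stabilizer G \<phi> x0"
    and "regular_subgroup G X \<phi> K"
  shows "(\<forall>f1\<in>L2_inv G \<phi> K x0 H. \<forall>f2\<in>L2_inv G \<phi> K x0 H.
            (\<lambda>k. f1 k + f2 k) \<in> L2_inv G \<phi> K x0 H
          \<and> conv G K f1 f2 \<in> L2_inv G \<phi> K x0 H)
       \<and> (\<forall>f\<in>L2_inv G \<phi> K x0 H. \<forall>c::complex. (\<lambda>k. c * f k) \<in> L2_inv G \<phi> K x0 H)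
       \<and> (\<forall>f\<in>L2_inv G \<phi> K x0 H. fstar G K f \<in> L2_inv G \<phi> K x0 H)
       \<and> bij_betw (phi_tilde \<phi> K x0) (inv_matrices G X \<phi>) (L2_inv G \<phi> K x0 H)
       \<and> (\<forall>A\<in>inv_matrices G X \<phi>. \<forall>B\<in>inv_matrices G X \<phi>. \<forall>c::complex.
            phi_tilde \<phi> K x0 (\<lambda>x y. A x y + B x y)
              = (\<lambda>k. phi_tilde \<phi> K x0 A k + phi_tilde \<phi> K x0 B k)
          \<and> phi_tilde \<phi> K x0 (\<lambda>x y. c * A x y) = (\<lambda>k. c * phi_tilde \<phi> K x0 A k)
          \<and> phi_tilde \<phi> K x0 (mat_mult X A B)
              = conv G K (phi_tilde \<phi> K x0 A) (phi_tilde \<phi> K x0 B)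
          \<and> phi_tilde \<phi> K x0 (mat_star X A) = fstar G K (phi_tilde \<phi> K x0 A))"
proof -
  interpret T: thm_setup G X \<phi> x0 K
    using assms by (simp add: thm_setup_def thm_setup_axioms_def)
  have L2e: "L2_inv G \<phi> K x0 H = T.L2" using assms(5) by simp
  have sumc: "(\<lambda>k. f1 k + f2 k) \<in> T.L2" if "f1 \<in> T.L2" "f2 \<in> T.L2" for f1 f2
    using that by (simp add: L2_inv_def fun_on_def)
  have convc: "conv G K f1 f2 \<in> T.L2" if f1: "f1 \<in> T.L2" and f2: "f2 \<in> T.L2" for f1 f2
  proof -
    have "conv G K f1 f2 = conv G K (T.pt (T.Mf f1)) (T.pt (T.Mf f2))"
      using T.Mf_pt[OF f1] T.Mf_pt[OF f2] by simp
    also have "\<dots> = T.pt (mat_mult X (T.Mf f1) (T.Mf f2))"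
      using T.mult_hom[OF T.Mf_inv[OF f1] T.Mf_inv[OF f2]] by simp
    finally show ?thesis using T.L1[OF T.mult_inv[OF T.Mf_inv[OF f1] T.Mf_inv[OF f2]]] by simp
  qed
  have scal: "(\<lambda>k. c * f k) \<in> T.L2" if "f \<in> T.L2" for f and c :: complex
    using that by (simp add: L2_inv_def fun_on_def)
  have starc: "fstar G K f \<in> T.L2" if f: "f \<in> T.L2" for f
  proof -
    have "fstar G K f = fstar G K (T.pt (T.Mf f))" using T.Mf_pt[OF f] by simp
    also have "\<dots> = T.pt (mat_star X (T.Mf f))" using T.star_hom[OF T.Mf_inv[OF f]] by simp
    finally show ?thesis using T.L1[OF T.star_inv[OF T.Mf_inv[OF f]]] by simp
  qed
  have homs: "T.pt (\<lambda>x y. A x y + B x y) = (\<lambda>k. T.pt A k + T.pt B k)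
          \<and> T.pt (\<lambda>x y. c * A x y) = (\<lambda>k. c * T.pt A k)
          \<and> T.pt (mat_mult X A B) = conv G K (T.pt A) (T.pt B)
          \<and> T.pt (mat_star X A) = fstar G K (T.pt A)"
    if A: "A \<in> T.IM" and B: "B \<in> T.IM" for A B and c :: complex
    using T.mult_hom[OF A B] T.star_hom[OF A] by (simp add: phi_tilde_def fun_eq_iff)
  show ?thesis unfolding L2e
    by (intro conjI ballI allI) (simp_all add: sumc convc scal starc homs T.bij)
qed

end
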